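(* Let $(M_1,f_1,g_1)$ be an $(m,n)$-hypermodule over a commutative Krasner $(m,n)$-hyperring $(R_1,f'_1,g'_1)$ and $(M_2,f_2,g_2)$ an $(m,n)$-hypermodule over a commutative Krasner $(m,n)$-hyperring $(R_2,f'_2,g'_2)$, both with scalar identity $1$, and consider the $(m,n)$-hypermodule $(M_1\times M_2,f_1\times f_2,g_1\times g_2)$ over $(R_1\times R_2,f'_1\times f'_2,g'_1\times g'_2)$. Let $\phi_1:\mathcal{SH}(M_1)\to\mathcal{SH}(M_1)\cup\{\varnothing\}$ and $\phi_2:\mathcal{SH}(M_2)\to\mathcal{SH}(M_2)\cup\{\varnothing\}$ be functions with $\phi_2(M_2)=M_2$. Then $Q_1\times M_2$ is an $n$-ary $\phi_1\times\phi_2$-classical prime subhypermodule of $M_1\times M_2$ if and only if $Q_1$ is an $n$-ary $\phi_1$-classical prime subhypermodule of $M_1$.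
   Context: A commutative Krasner $(m,n)$-hyperring with scalar identity $1$ is a triple $(R,f',g')$ where $(R,f')$ is a canonical $m$-ary hypergroup with zero $0$, $(R,g')$ is a commutative $n$-ary semigroup, $g'$ is distributive over $f'$, $0$ is a zero element for $g'$, and $g'(x,1^{(n-1)})=x$. Notation: $x_i^j$ denotes $x_i,\dots,x_j$ and $x^{(k)}$ denotes $x$ repeated $k$ times. An $(m,n)$-hypermodule over $R$ is a triple $(M,f,g)$ with $(M,f)$ a canonical $m$-ary hypergroup with zero $0$ and $g:R^{n-1}\times M\to P^*(M)$ satisfying: $g(r_1^{n-1},f(x_1^m))=f(g(r_1^{n-1},x_1),\dots,g(r_1^{n-1},x_m))$; $g(r_1^{i-1},f'(s_1^m),r_{i+1}^{n-1},x)=f(g(r_1^{i-1},s_1,r_{i+1}^{n-1},x),\dots,g(r_1^{i-1},s_m,r_{i+1}^{n-1},x))$; $g(r_1^{i-1},g'(r_i^{i+n-1}),r_{i+n}^{2n-2},x)=g(r_1^{n-1},g(r_n^{2n-2},x))$; $g(r_1^{i-1},0,r_{i+1}^{n-1},x)=\{0\}$; moreover $g(1^{(n-1)},a)=\{a\}$. A subhypermodule is a nonempty $N\subseteq M$ with $(N,f)$ an $m$-ary subhypergroup and $g(R^{(n-1)},N)\subseteq N$; $\mathcal{SH}(M)$ is the set of subhypermodules. The product hyperring has componentwise operations, with identity $(1,1)$. On $M_1\times M_2$: $f_1\times f_2((a_1,b_1),\dots,(a_m,b_m))=\{(x_1,x_2):x_1\in f_1(a_1^m),x_2\in f_2(b_1^m)\}$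 and $g_1\times g_2((r_1,s_1),\dots,(r_{n-1},s_{n-1}),(a,b))=\{(y_1,y_2):y_1\in g_1(r_1^{n-1},a),y_2\in g_2(s_1^{n-1},b)\}$. The function $\phi_1\times\phi_2$ is defined on product subhypermodules by $(\phi_1\times\phi_2)(K_1\times K_2)=\phi_1(K_1)\times\phi_2(K_2)$. Given a function $\phi$ on subhypermodules of an $(m,n)$-hypermodule with external operation $g$, a proper subhypermodule $Q$ is $n$-ary $\phi$-classical prime if $g(r_1^{n-1},a)\subseteq Q\setminus\phi(Q)$ implies $g(r_i,1^{(n-2)},a)\subseteq Q$ for some $1\le i\le n-1$ (for $M_1\times M_2$, $1$ is $(1,1)$). *)

theory Defs
  imports Main "HOL-Library.Multiset"
begin

(* Lists of length k encode k-tuples x_1^k. Hyperoperations return sets. *)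

definition sing :: "'a \<Rightarrow> 'a set" where "sing x = {x}"

definition liftS :: "('a list \<Rightarrow> 'b set) \<Rightarrow> 'a set list \<Rightarrow> 'b set" where
  "liftS F As = \<Union> {F xs | xs. list_all2 (\<in>) xs As}"

definition ins :: "nat \<Rightarrow> 'a \<Rightarrow> 'a list \<Rightarrow> 'a list" where
  "ins i y as = take i as @ [y] @ drop i as"

definition mary_hypergroup :: "'a set \<Rightarrow> ('a list \<Rightarrow> 'a set) \<Rightarrow> nat \<Rightarrow> bool" where
  "mary_hypergroup H f m \<longleftrightarrow> m \<ge> 2 \<and>
    (\<forall>xs \<in> lists H. length xs = m \<longrightarrow> f xs \<noteq> {} \<and> f xs \<subseteq> H) \<and>
    (\<forall>xs \<in> lists H. length xs = 2*m - 1 \<longrightarrow> (\<forall>i<m. \<forall>j<m.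
        liftS f (map sing (take i xs) @ [f (take m (drop i xs))] @ map sing (drop (i+m) xs)) =
        liftS f (map sing (take j xs) @ [f (take m (drop j xs))] @ map sing (drop (j+m) xs)))) \<and>
    (\<forall>xs \<in> lists H. length xs = m \<longrightarrow> (\<forall>i<m.
        liftS f (map sing (take i xs) @ [H] @ map sing (drop (Suc i) xs)) = H))"

definition neg :: "'a set \<Rightarrow> ('a list \<Rightarrow> 'a set) \<Rightarrow> 'a \<Rightarrow> nat \<Rightarrow> 'a \<Rightarrow> 'a" where
  "neg H f z m x = (THE y. y \<in> H \<and> z \<in> f (x # y # replicate (m-2) z))"

definition canonical_hypergroup :: "'a set \<Rightarrow> ('a list \<Rightarrow> 'a set) \<Rightarrow> 'a \<Rightarrow> nat \<Rightarrow> bool" where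
  "canonical_hypergroup H f z m \<longleftrightarrow> mary_hypergroup H f m \<and>
    (\<forall>xs \<in> lists H. \<forall>ys. length xs = m \<longrightarrow> mset xs = mset ys \<longrightarrow> f xs = f ys) \<and>
    z \<in> H \<and> (\<forall>x\<in>H. f (x # replicate (m-1) z) = {x}) \<and>
    (\<forall>x\<in>H. \<exists>!y. y \<in> H \<and> z \<in> f (x # y # replicate (m-2) z)) \<and>
    (\<forall>x\<in>H. \<forall>xs \<in> lists H. length xs = m \<longrightarrow> x \<in> f xs \<longrightarrow>
        (\<forall>i<m. xs ! i \<in> f ((map (neg H f z m) xs)[i := x])))"

definition comm_nary_semigroup :: "'r set \<Rightarrow> ('r list \<Rightarrow> 'r) \<Rightarrow> nat \<Rightarrow> bool" where
  "comm_nary_semigroup R g n \<longleftrightarrow> n \<ge> 2 \<and>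
    (\<forall>xs \<in> lists R. length xs = n \<longrightarrow> g xs \<in> R) \<and>
    (\<forall>xs \<in> lists R. length xs = 2*n - 1 \<longrightarrow> (\<forall>i<n. \<forall>j<n.
        g (take i xs @ [g (take n (drop i xs))] @ drop (i+n) xs) =
        g (take j xs @ [g (take n (drop j xs))] @ drop (j+n) xs))) \<and>
    (\<forall>xs \<in> lists R. \<forall>ys. length xs = n \<longrightarrow> mset xs = mset ys \<longrightarrow> g xs = g ys)"

definition krasner_hyperring ::
  "'r set \<Rightarrow> ('r list \<Rightarrow> 'r set) \<Rightarrow> ('r list \<Rightarrow> 'r) \<Rightarrow> 'r \<Rightarrow> 'r \<Rightarrow> nat \<Rightarrow> nat \<Rightarrow> bool" where
  "krasner_hyperring R f' g' z one m n \<longleftrightarrow>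
    canonical_hypergroup R f' z m \<and> comm_nary_semigroup R g' n \<and>
    (\<forall>as \<in> lists R. \<forall>xs \<in> lists R. length as = n - 1 \<longrightarrow> length xs = m \<longrightarrow> (\<forall>i<n.
        (\<lambda>y. g' (ins i y as)) ` f' xs = f' (map (\<lambda>x. g' (ins i x as)) xs))) \<and>
    (\<forall>as \<in> lists R. length as = n - 1 \<longrightarrow> (\<forall>i<n. g' (ins i z as) = z)) \<and>
    one \<in> R \<and> (\<forall>x\<in>R. g' (x # replicate (n-1) one) = x)"

definition hypermodule ::
  "'r set \<Rightarrow> ('r list \<Rightarrow> 'r set) \<Rightarrow> ('r list \<Rightarrow> 'r) \<Rightarrow> 'r \<Rightarrow> 'r \<Rightarrow> nat \<Rightarrow> nat \<Rightarrow>
   'a set \<Rightarrow> ('a list \<Rightarrow> 'a set) \<Rightarrow> ('r list \<Rightarrow> 'a \<Rightarrow> 'a set) \<Rightarrow> 'a \<Rightarrow> bool" where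
  "hypermodule R f' g' z one m n M f g zM \<longleftrightarrow>
    canonical_hypergroup M f zM m \<and>
    (\<forall>rs \<in> lists R. \<forall>x\<in>M. length rs = n - 1 \<longrightarrow> g rs x \<noteq> {} \<and> g rs x \<subseteq> M) \<and>
    (\<forall>rs \<in> lists R. \<forall>xs \<in> lists M. length rs = n - 1 \<longrightarrow> length xs = m \<longrightarrow>
        \<Union> (g rs ` f xs) = liftS f (map (g rs) xs)) \<and>
    (\<forall>rs \<in> lists R. \<forall>ss \<in> lists R. \<forall>x\<in>M. length rs = n - 2 \<longrightarrow> length ss = m \<longrightarrow>
        (\<forall>i<n-1. \<Union> ((\<lambda>s. g (ins i s rs) x) ` f' ss) = liftS f (map (\<lambda>s. g (ins i s rs) x) ss))) \<and>
    (\<forall>rs \<in> lists R. \<forall>x\<in>M. length rs = 2*n - 2 \<longrightarrow> (\<forall>i<n-1.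
        g (take i rs @ [g' (take n (drop i rs))] @ drop (i+n) rs) x =
        \<Union> (g (take (n-1) rs) ` g (drop (n-1) rs) x))) \<and>
    (\<forall>rs \<in> lists R. \<forall>x\<in>M. length rs = n - 2 \<longrightarrow> (\<forall>i<n-1. g (ins i z rs) x = {zM})) \<and>
    (\<forall>a\<in>M. g (replicate (n-1) one) a = {a})"

definition subhypermodules ::
  "'r set \<Rightarrow> nat \<Rightarrow> nat \<Rightarrow> 'a set \<Rightarrow> ('a list \<Rightarrow> 'a set) \<Rightarrow> ('r list \<Rightarrow> 'a \<Rightarrow> 'a set) \<Rightarrow> 'a set set" where
  "subhypermodules R m n M f g = {N. N \<noteq> {} \<and> N \<subseteq> M \<and> mary_hypergroup N f m \<and>
     (\<forall>rs \<in> lists R. \<forall>x\<in>N. length rs = n - 1 \<longrightarrow> g rs x \<subseteq> N)}"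

definition classical_prime ::
  "'r set \<Rightarrow> 'r \<Rightarrow> nat \<Rightarrow> nat \<Rightarrow> 'a set \<Rightarrow> ('a list \<Rightarrow> 'a set) \<Rightarrow> ('r list \<Rightarrow> 'a \<Rightarrow> 'a set)
   \<Rightarrow> ('a set \<Rightarrow> 'a set) \<Rightarrow> 'a set \<Rightarrow> bool" where
  "classical_prime R one m n M f g phi Q \<longleftrightarrow>
    Q \<in> subhypermodules R m n M f g \<and> Q \<noteq> M \<and>
    (\<forall>rs \<in> lists R. \<forall>a\<in>M. length rs = n - 1 \<longrightarrow> g rs a \<subseteq> Q - phi Q \<longrightarrow>
        (\<exists>i<n-1. g (rs ! i # replicate (n-2) one) a \<subseteq> Q))"

definition prod_hop :: "('a list \<Rightarrow> 'a set) \<Rightarrow> ('b list \<Rightarrow> 'b set) \<Rightarrow> ('a \<times> 'b) list \<Rightarrow> ('a \<times> 'b) set" where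
  "prod_hop f1 f2 xs = f1 (map fst xs) \<times> f2 (map snd xs)"

definition prod_op :: "('a list \<Rightarrow> 'a) \<Rightarrow> ('b list \<Rightarrow> 'b) \<Rightarrow> ('a \<times> 'b) list \<Rightarrow> 'a \<times> 'b" where
  "prod_op g1 g2 xs = (g1 (map fst xs), g2 (map snd xs))"

definition prod_ext ::
  "('r list \<Rightarrow> 'a \<Rightarrow> 'a set) \<Rightarrow> ('s list \<Rightarrow> 'b \<Rightarrow> 'b set) \<Rightarrow> ('r \<times> 's) list \<Rightarrow> 'a \<times> 'b \<Rightarrow> ('a \<times> 'b) set" where
  "prod_ext g1 g2 rs x = g1 (map fst rs) (fst x) \<times> g2 (map snd rs) (snd x)"

(* (phi1 x phi2)(K1 x K2) = phi1 K1 x phi2 K2 (for nonempty K1, K2) *)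
definition prod_phi :: "('a set \<Rightarrow> 'a set) \<Rightarrow> ('b set \<Rightarrow> 'b set) \<Rightarrow> ('a \<times> 'b) set \<Rightarrow> ('a \<times> 'b) set" where
  "prod_phi phi1 phi2 K = phi1 (fst ` K) \<times> phi2 (snd ` K)"

end

theory Submission
  imports Defs
begin

definition PP :: "'a set list \<Rightarrow> 'b set list \<Rightarrow> ('a \<times> 'b) set list" where
  "PP As Bs = map (\<lambda>(A,B). A \<times> B) (zip As Bs)"

lemma la2_PP: "length As = length Bs \<Longrightarrow>
  list_all2 (\<in>) ps (PP As Bs) \<longleftrightarrow> list_all2 (\<in>) (map fst ps) As \<and> list_all2 (\<in>) (map snd ps) Bs"
proof (induction As arbitrary: Bs ps)
  case Nil then show ?case by (simp add: PP_def)
next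
  case (Cons a As)
  then obtain b Bs' where B: "Bs = b # Bs'" by (cases Bs) auto
  show ?case
  proof (cases ps)
    case Nil then show ?thesis by (simp add: PP_def B)
  next
    case (Cons p ps')
    have "list_all2 (\<in>) ps' (PP As Bs') \<longleftrightarrow> list_all2 (\<in>) (map fst ps') As \<and> list_all2 (\<in>) (map snd ps') Bs'"
      using Cons.IH Cons.prems B by simp
    then show ?thesis using Cons B by (cases p) (auto simp: PP_def)
  qed
qed

lemma liftS_PP: "length As = length Bs \<Longrightarrow>
  liftS (prod_hop f1 f2) (PP As Bs) = liftS f1 As \<times> liftS f2 Bs"
proof (intro set_eqI iffI)
  fix z assume L: "length As = length Bs" and z: "z \<in> liftS (prod_hop f1 f2) (PP As Bs)"
  then obtain ps where "list_all2 (\<in>) ps (PP As Bs)" "z \<in> prod_hop f1 f2 ps"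
    unfolding liftS_def by blast
  then show "z \<in> liftS f1 As \<times> liftS f2 Bs"
    using la2_PP[OF L] unfolding liftS_def prod_hop_def by blast
next
  fix z assume L: "length As = length Bs" and z: "z \<in> liftS f1 As \<times> liftS f2 Bs"
  obtain x y where zxy: "z = (x,y)" by (cases z)
  obtain xs where xs: "list_all2 (\<in>) xs As" "x \<in> f1 xs" using z zxy unfolding liftS_def by blast
  obtain ys where ys: "list_all2 (\<in>) ys Bs" "y \<in> f2 ys" using z zxy unfolding liftS_def by blast
  have lxy: "length xs = length ys" using xs ys L list_all2_lengthD by metis
  have "list_all2 (\<in>) (zip xs ys) (PP As Bs)" using la2_PP[OF L] xs ys lxy by simp
  moreover have "z \<in> prod_hop f1 f2 (zip xs ys)" using xs ys lxy zxy by (simp add: prod_hop_def)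
  ultimately show "z \<in> liftS (prod_hop f1 f2) (PP As Bs)" unfolding liftS_def by blast
qed

lemma PP_append: "length As = length Bs \<Longrightarrow> PP (As @ As') (Bs @ Bs') = PP As Bs @ PP As' Bs'"
  by (simp add: PP_def)

lemma PP_sing: "length xs = length ys \<Longrightarrow> PP (map sing xs) (map sing ys) = map sing (zip xs ys)"
proof (induction xs arbitrary: ys)
  case Nil then show ?case by (simp add: PP_def)
next
  case (Cons a xs) then show ?case by (cases ys) (auto simp: PP_def sing_def)
qed

lemma PP_fs: "PP (map (sing \<circ> fst) qs) (map (sing \<circ> snd) qs) = map sing qs"
  by (induction qs) (auto simp: PP_def sing_def)

lemma PP_Cons: "PP (a # As) (b # Bs) = (a \<times> b) # PP As Bs"
  by (simp add: PP_def)

lemma L_PP: "map sing (take i ps) @ [prod_hop f1 f2 (take m (drop i ps))] @ map sing (drop k ps) =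
  PP (map sing (take i (map fst ps)) @ [f1 (take m (drop i (map fst ps)))] @ map sing (drop k (map fst ps)))
     (map sing (take i (map snd ps)) @ [f2 (take m (drop i (map snd ps)))] @ map sing (drop k (map snd ps)))"
  by (simp add: PP_append PP_Cons PP_fs prod_hop_def take_map drop_map)

lemma R_PP: "map sing (take i ps) @ [A \<times> B] @ map sing (drop k ps) =
  PP (map sing (take i (map fst ps)) @ [A] @ map sing (drop k (map fst ps)))
     (map sing (take i (map snd ps)) @ [B] @ map sing (drop k (map snd ps)))"
  by (simp add: PP_append PP_Cons PP_fs take_map drop_map)

lemma mh_m: "mary_hypergroup H f m \<Longrightarrow> 2 \<le> m"
  unfolding mary_hypergroup_def by blast

lemma mh_ne: "mary_hypergroup H f m \<Longrightarrow> xs \<in> lists H \<Longrightarrow> length xs = m \<Longrightarrow> f xs \<noteq> {} \<and> f xs \<subseteq> H"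
  unfolding mary_hypergroup_def by blast

lemma mh_assoc: "mary_hypergroup H f m \<Longrightarrow> xs \<in> lists H \<Longrightarrow> length xs = 2*m - 1 \<Longrightarrow> i < m \<Longrightarrow> j < m \<Longrightarrow>
        liftS f (map sing (take i xs) @ [f (take m (drop i xs))] @ map sing (drop (i+m) xs)) =
        liftS f (map sing (take j xs) @ [f (take m (drop j xs))] @ map sing (drop (j+m) xs))"
  unfolding mary_hypergroup_def by blast

lemma mh_repr: "mary_hypergroup H f m \<Longrightarrow> xs \<in> lists H \<Longrightarrow> length xs = m \<Longrightarrow> i < m \<Longrightarrow>
        liftS f (map sing (take i xs) @ [H] @ map sing (drop (Suc i) xs)) = H"
  unfolding mary_hypergroup_def by blast

lemma liftS_nonempty:
  assumes "mary_hypergroup B f m" "length Ss = m" "\<forall>S\<in>set Ss. S \<noteq> {} \<and> S \<subseteq> B"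
  shows "liftS f Ss \<noteq> {}"
proof -
  define xs where "xs = map (\<lambda>S. SOME x. x \<in> S) Ss"
  have "list_all2 (\<in>) xs Ss" using assms(3) unfolding xs_def
  proof (unfold list_all2_conv_all_nth, intro conjI allI impI)
    fix k assume "k < length (map (\<lambda>S. SOME x. x \<in> S) Ss)"
    then have "Ss ! k \<noteq> {}" using assms(3) nth_mem by fastforce
    then show "map (\<lambda>S. SOME x. x \<in> S) Ss ! k \<in> Ss ! k"
      using \<open>k < _\<close> by (simp add: some_in_eq)
  qed simp
  moreover have "xs \<in> lists B"
  proof -
    have "\<forall>S\<in>set Ss. (SOME x. x \<in> S) \<in> B"
    proof
      fix S assume "S \<in> set Ss"
      then have "S \<noteq> {}" "S \<subseteq> B" using assms(3) by auto
      then show "(SOME x. x \<in> S) \<in> B" by (metis some_in_eq subsetD)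
    qed
    then show ?thesis unfolding xs_def by auto
  qed
  moreover have "length xs = m" using assms(2) by (simp add: xs_def)
  ultimately show ?thesis using mh_ne[OF assms(1)] unfolding liftS_def by blast
qed

lemma times_cancel: "A \<times> C = A' \<times> C \<Longrightarrow> C \<noteq> {} \<Longrightarrow> A = A'"
  by blast

lemma liftS_L: "liftS (prod_hop f1 f2) (map sing (take i ps) @ [prod_hop f1 f2 (take m (drop i ps))] @ map sing (drop k ps)) =
  liftS f1 (map sing (take i (map fst ps)) @ [f1 (take m (drop i (map fst ps)))] @ map sing (drop k (map fst ps))) \<times>
  liftS f2 (map sing (take i (map snd ps)) @ [f2 (take m (drop i (map snd ps)))] @ map sing (drop k (map snd ps)))"
  unfolding L_PP by (rule liftS_PP) simp

lemma liftS_R: "liftS (prod_hop f1 f2) (map sing (take i ps) @ [A \<times> B] @ map sing (drop k ps)) =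
  liftS f1 (map sing (take i (map fst ps)) @ [A] @ map sing (drop k (map fst ps))) \<times>
  liftS f2 (map sing (take i (map snd ps)) @ [B] @ map sing (drop k (map snd ps)))"
  unfolding R_PP by (rule liftS_PP) simp

lemma mh_prod:
  assumes A: "mary_hypergroup A f1 m" and B: "mary_hypergroup B f2 m"
  shows "mary_hypergroup (A \<times> B) (prod_hop f1 f2) m"
  unfolding mary_hypergroup_def
proof (intro conjI ballI allI impI)
  show "2 \<le> m" using mh_m[OF A] .
next
  fix ps assume "ps \<in> lists (A \<times> B)" "length ps = m"
  then have "map fst ps \<in> lists A" "map snd ps \<in> lists B" "length (map fst ps) = m" "length (map snd ps) = m"
    by (auto simp: mem_Times_iff)
  then show "prod_hop f1 f2 ps \<noteq> {}" "prod_hop f1 f2 ps \<subseteq> A \<times> B"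
    using mh_ne[OF A] mh_ne[OF B] unfolding prod_hop_def by blast+
next
  fix ps i j assume ps: "ps \<in> lists (A \<times> B)" "length ps = 2*m - 1" and ij: "i < m" "j < m"
  then have "map fst ps \<in> lists A" "map snd ps \<in> lists B" "length (map fst ps) = 2*m-1" "length (map snd ps) = 2*m-1"
    by (auto simp: mem_Times_iff)
  then have e1: "liftS f1 (map sing (take i (map fst ps)) @ [f1 (take m (drop i (map fst ps)))] @ map sing (drop (i+m) (map fst ps))) =
        liftS f1 (map sing (take j (map fst ps)) @ [f1 (take m (drop j (map fst ps)))] @ map sing (drop (j+m) (map fst ps)))"
   and e2: "liftS f2 (map sing (take i (map snd ps)) @ [f2 (take m (drop i (map snd ps)))] @ map sing (drop (i+m) (map snd ps))) =
        liftS f2 (map sing (take j (map snd ps)) @ [f2 (take m (drop j (map snd ps)))] @ map sing (drop (j+m) (map snd ps)))"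
    using mh_assoc[OF A] mh_assoc[OF B] ij by blast+
  show "liftS (prod_hop f1 f2) (map sing (take i ps) @ [prod_hop f1 f2 (take m (drop i ps))] @ map sing (drop (i + m) ps)) =
        liftS (prod_hop f1 f2) (map sing (take j ps) @ [prod_hop f1 f2 (take m (drop j ps))] @ map sing (drop (j + m) ps))"
    unfolding liftS_L e1 e2 ..
next
  fix ps i assume ps: "ps \<in> lists (A \<times> B)" "length ps = m" and i: "i < m"
  then have "map fst ps \<in> lists A" "map snd ps \<in> lists B" "length (map fst ps) = m" "length (map snd ps) = m"
    by (auto simp: mem_Times_iff)
  then have e1: "liftS f1 (map sing (take i (map fst ps)) @ [A] @ map sing (drop (Suc i) (map fst ps))) = A"
   and e2: "liftS f2 (map sing (take i (map snd ps)) @ [B] @ map sing (drop (Suc i) (map snd ps))) = B"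
    using mh_repr[OF A] mh_repr[OF B] i by blast+
  show "liftS (prod_hop f1 f2) (map sing (take i ps) @ [A \<times> B] @ map sing (drop (Suc i) ps)) = A \<times> B"
    unfolding liftS_R e1 e2 ..
qed

lemma mh_prod_rev:
  assumes P: "mary_hypergroup (A \<times> B) (prod_hop f1 f2) m" and B: "mary_hypergroup B f2 m" and b: "b \<in> B"
  shows "mary_hypergroup A f1 m"
  unfolding mary_hypergroup_def
proof (intro conjI ballI allI impI)
  show "2 \<le> m" using mh_m[OF P] .
next
  fix xs assume xs: "xs \<in> lists A" "length xs = m"
  define ps where "ps = zip xs (replicate m b)"
  have ps: "ps \<in> lists (A \<times> B)" "length ps = m" "map fst ps = xs" "map snd ps = replicate m b"
    using xs b by (auto simp: ps_def dest: set_zip_leftD set_zip_rightD)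
  have "replicate m b \<in> lists B" "length (replicate m b) = m" using b by auto
  then have "f2 (replicate m b) \<noteq> {}" using mh_ne[OF B] by blast
  moreover have "prod_hop f1 f2 ps \<noteq> {}" "prod_hop f1 f2 ps \<subseteq> A \<times> B"
    using mh_ne[OF P] ps by blast+
  ultimately show "f1 xs \<noteq> {}" "f1 xs \<subseteq> A" using ps unfolding prod_hop_def by auto
next
  fix xs i j assume xs: "xs \<in> lists A" "length xs = 2*m - 1" and ij: "i < m" "j < m"
  define ys where "ys = replicate (2*m-1) b"
  define ps where "ps = zip xs ys"
  have ps: "ps \<in> lists (A \<times> B)" "length ps = 2*m-1" "map fst ps = xs" "map snd ps = ys"
    using xs b by (auto simp: ps_def ys_def dest: set_zip_leftD set_zip_rightD)
  have ys: "ys \<in> lists B" "length ys = 2*m-1" using b by (auto simp: ys_def)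
  have e: "liftS (prod_hop f1 f2) (map sing (take i ps) @ [prod_hop f1 f2 (take m (drop i ps))] @ map sing (drop (i + m) ps)) =
        liftS (prod_hop f1 f2) (map sing (take j ps) @ [prod_hop f1 f2 (take m (drop j ps))] @ map sing (drop (j + m) ps))"
    using mh_assoc[OF P] ps ij by blast
  have e2: "liftS f2 (map sing (take i ys) @ [f2 (take m (drop i ys))] @ map sing (drop (i+m) ys)) =
        liftS f2 (map sing (take j ys) @ [f2 (take m (drop j ys))] @ map sing (drop (j+m) ys))"
    using mh_assoc[OF B] ys ij by blast
  have tk: "take m (drop i ys) \<in> lists B" "length (take m (drop i ys)) = m"
    using ys ij by (auto dest: in_set_takeD in_set_dropD)
  have "f2 (take m (drop i ys)) \<noteq> {} \<and> f2 (take m (drop i ys)) \<subseteq> B"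
    using mh_ne[OF B] tk by blast
  then have ne: "liftS f2 (map sing (take i ys) @ [f2 (take m (drop i ys))] @ map sing (drop (i+m) ys)) \<noteq> {}"
    using ys ij b
    by (intro liftS_nonempty[OF B]) (auto simp: sing_def dest: in_set_takeD in_set_dropD)
  from e have "liftS f1 (map sing (take i xs) @ [f1 (take m (drop i xs))] @ map sing (drop (i+m) xs)) \<times>
       liftS f2 (map sing (take i ys) @ [f2 (take m (drop i ys))] @ map sing (drop (i+m) ys)) =
     liftS f1 (map sing (take j xs) @ [f1 (take m (drop j xs))] @ map sing (drop (j+m) xs)) \<times>
       liftS f2 (map sing (take j ys) @ [f2 (take m (drop j ys))] @ map sing (drop (j+m) ys))"
    unfolding liftS_L ps(3,4) .
  then show "liftS f1 (map sing (take i xs) @ [f1 (take m (drop i xs))] @ map sing (drop (i+m) xs)) =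
     liftS f1 (map sing (take j xs) @ [f1 (take m (drop j xs))] @ map sing (drop (j+m) xs))"
    using times_cancel ne e2 by metis
next
  fix xs i assume xs: "xs \<in> lists A" "length xs = m" and i: "i < m"
  define ys where "ys = replicate m b"
  define ps where "ps = zip xs ys"
  have ps: "ps \<in> lists (A \<times> B)" "length ps = m" "map fst ps = xs" "map snd ps = ys"
    using xs b by (auto simp: ps_def ys_def dest: set_zip_leftD set_zip_rightD)
  have ys: "ys \<in> lists B" "length ys = m" using b by (auto simp: ys_def)
  have e: "liftS (prod_hop f1 f2) (map sing (take i ps) @ [A \<times> B] @ map sing (drop (Suc i) ps)) = A \<times> B"
    using mh_repr[OF P] ps i by blast
  have e2: "liftS f2 (map sing (take i ys) @ [B] @ map sing (drop (Suc i) ys)) = B"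
    using mh_repr[OF B] ys i by blast
  from e have "liftS f1 (map sing (take i xs) @ [A] @ map sing (drop (Suc i) xs)) \<times> B = A \<times> B"
    unfolding liftS_R ps(3,4) e2 .
  then show "liftS f1 (map sing (take i xs) @ [A] @ map sing (drop (Suc i) xs)) = A"
    using times_cancel b by blast
qed

lemma shm_prod:
  assumes B: "mary_hypergroup M2 f2 m" and b: "b \<in> M2" and one2: "one2 \<in> R2"
    and g2: "\<forall>rs \<in> lists R2. \<forall>x\<in>M2. length rs = n - 1 \<longrightarrow> g2 rs x \<noteq> {} \<and> g2 rs x \<subseteq> M2"
  shows "Q1 \<times> M2 \<in> subhypermodules (R1 \<times> R2) m n (M1 \<times> M2) (prod_hop f1 f2) (prod_ext g1 g2)
     \<longleftrightarrow> Q1 \<in> subhypermodules R1 m n M1 f1 g1"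
proof
  assume H: "Q1 \<times> M2 \<in> subhypermodules (R1 \<times> R2) m n (M1 \<times> M2) (prod_hop f1 f2) (prod_ext g1 g2)"
  have "Q1 \<noteq> {}" "Q1 \<subseteq> M1" using H b by (auto simp: subhypermodules_def)
  moreover have "mary_hypergroup Q1 f1 m"
    using H mh_prod_rev[OF _ B b] by (auto simp: subhypermodules_def)
  moreover have "g1 rs x \<subseteq> Q1" if rs: "rs \<in> lists R1" "x \<in> Q1" "length rs = n - 1" for rs x
  proof -
    define ps where "ps = zip rs (replicate (n-1) one2)"
    have ps: "ps \<in> lists (R1 \<times> R2)" "length ps = n - 1" "map fst ps = rs" "map snd ps = replicate (n-1) one2"
      using rs one2 by (auto simp: ps_def dest: set_zip_leftD set_zip_rightD)
    have "prod_ext g1 g2 ps (x, b) \<subseteq> Q1 \<times> M2"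
      using H ps rs b unfolding subhypermodules_def by blast
    then have "g1 rs x \<times> g2 (replicate (n-1) one2) b \<subseteq> Q1 \<times> M2"
      using ps by (simp add: prod_ext_def)
    moreover have "replicate (n-1) one2 \<in> lists R2" using one2 by auto
    then have "g2 (replicate (n-1) one2) b \<noteq> {}" using g2 b by auto
    ultimately show ?thesis by blast
  qed
  ultimately show "Q1 \<in> subhypermodules R1 m n M1 f1 g1" unfolding subhypermodules_def by blast
next
  assume H: "Q1 \<in> subhypermodules R1 m n M1 f1 g1"
  have "Q1 \<times> M2 \<noteq> {}" "Q1 \<times> M2 \<subseteq> M1 \<times> M2" using H b by (auto simp: subhypermodules_def)
  moreover have "mary_hypergroup (Q1 \<times> M2) (prod_hop f1 f2) m"
    using H mh_prod[OF _ B] by (auto simp: subhypermodules_def)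
  moreover have "prod_ext g1 g2 ps p \<subseteq> Q1 \<times> M2"
    if ps: "ps \<in> lists (R1 \<times> R2)" "p \<in> Q1 \<times> M2" "length ps = n - 1" for ps p
  proof -
    have "map fst ps \<in> lists R1" "map snd ps \<in> lists R2" using ps(1) by (auto simp: mem_Times_iff)
    moreover have "fst p \<in> Q1" "snd p \<in> M2" using ps(2) by auto
    ultimately have "g1 (map fst ps) (fst p) \<subseteq> Q1" "g2 (map snd ps) (snd p) \<subseteq> M2"
      using H g2 ps(3) unfolding subhypermodules_def by auto
    then show ?thesis by (auto simp: prod_ext_def)
  qed
  ultimately show "Q1 \<times> M2 \<in> subhypermodules (R1 \<times> R2) m n (M1 \<times> M2) (prod_hop f1 f2) (prod_ext g1 g2)"
    unfolding subhypermodules_def by blast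
qed

lemma cp_iff: "classical_prime R one m n M f g phi Q \<longleftrightarrow>
    Q \<in> subhypermodules R m n M f g \<and> Q \<noteq> M \<and>
    (\<forall>rs. rs \<in> lists R \<longrightarrow> (\<forall>a. a \<in> M \<longrightarrow> length rs = n - 1 \<longrightarrow> g rs a \<subseteq> Q - phi Q \<longrightarrow>
        (\<exists>i<n-1. g (rs ! i # replicate (n-2) one) a \<subseteq> Q)))"
  unfolding classical_prime_def Ball_def ..

lemma hm_g: "hypermodule R f' g' z one m n M f g zM \<Longrightarrow> rs \<in> lists R \<Longrightarrow> x \<in> M \<Longrightarrow> length rs = n - 1 \<Longrightarrow>
   g rs x \<noteq> {} \<and> g rs x \<subseteq> M"
  unfolding hypermodule_def by (elim conjE) (drule bspec, assumption, drule bspec, assumption, drule mp, assumption, assumption)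

lemma hm_can: "hypermodule R f' g' z one m n M f g zM \<Longrightarrow> canonical_hypergroup M f zM m"
  unfolding hypermodule_def by (rule conjunct1)

theorem mainTheorem18:
  fixes R1 :: "'r set" and R2 :: "'s set" and M1 :: "'a set" and M2 :: "'b set"
    and f1' :: "'r list \<Rightarrow> 'r set" and g1' :: "'r list \<Rightarrow> 'r"
    and f2' :: "'s list \<Rightarrow> 's set" and g2' :: "'s list \<Rightarrow> 's"
    and f1 :: "'a list \<Rightarrow> 'a set" and g1 :: "'r list \<Rightarrow> 'a \<Rightarrow> 'a set"
    and f2 :: "'b list \<Rightarrow> 'b set" and g2 :: "'s list \<Rightarrow> 'b \<Rightarrow> 'b set"
    and z1 one1 :: 'r and z2 one2 :: 's and zM1 :: 'a and zM2 :: 'b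
    and m n :: nat
    and phi1 :: "'a set \<Rightarrow> 'a set" and phi2 :: "'b set \<Rightarrow> 'b set"
    and Q1 :: "'a set"
  assumes "krasner_hyperring R1 f1' g1' z1 one1 m n"
    and "krasner_hyperring R2 f2' g2' z2 one2 m n"
    and "hypermodule R1 f1' g1' z1 one1 m n M1 f1 g1 zM1"
    and "hypermodule R2 f2' g2' z2 one2 m n M2 f2 g2 zM2"
    and "\<forall>K \<in> subhypermodules R1 m n M1 f1 g1. phi1 K \<in> subhypermodules R1 m n M1 f1 g1 \<union> {{}}"
    and "\<forall>K \<in> subhypermodules R2 m n M2 f2 g2. phi2 K \<in> subhypermodules R2 m n M2 f2 g2 \<union> {{}}"
    and "phi2 M2 = M2"
  shows "classical_prime (R1 \<times> R2) (one1, one2) m n (M1 \<times> M2) (prod_hop f1 f2) (prod_ext g1 g2)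
           (prod_phi phi1 phi2) (Q1 \<times> M2)
         \<longleftrightarrow> classical_prime R1 one1 m n M1 f1 g1 phi1 Q1"
proof -
  have can2: "canonical_hypergroup M2 f2 zM2 m" using hm_can[OF assms(4)] .
  have B: "mary_hypergroup M2 f2 m" using conjunct1[OF can2[unfolded canonical_hypergroup_def]] .
  have b: "zM2 \<in> M2" using conjunct1[OF conjunct2[OF conjunct2[OF can2[unfolded canonical_hypergroup_def]]]] .
  have one2: "one2 \<in> R2" using conjunct1[OF conjunct2[OF conjunct2[OF conjunct2[OF conjunct2[OF assms(2)[unfolded krasner_hyperring_def]]]]]] .
  have g2: "\<forall>rs \<in> lists R2. \<forall>x\<in>M2. length rs = n - 1 \<longrightarrow> g2 rs x \<noteq> {} \<and> g2 rs x \<subseteq> M2"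
    using hm_g[OF assms(4)] by blast
  have n2: "2 \<le> n" using conjunct1[OF conjunct1[OF conjunct2[OF assms(1)[unfolded krasner_hyperring_def]], unfolded comm_nary_semigroup_def]] .
  have rl: "replicate (n-1) one2 \<in> lists R2" "length (replicate (n-1) one2) = n - 1" using one2 by auto
  have rl2: "one2 # replicate (n-2) one2 = replicate (n-1) one2" using n2
  proof -
    have "n - 1 = Suc (n - 2)" using n2 by arith
    then show ?thesis by simp
  qed
  have g2r: "g2 (replicate (n-1) one2) x \<noteq> {} \<and> g2 (replicate (n-1) one2) x \<subseteq> M2" if "x \<in> M2" for x
    using g2 rl that by blast
  note shm = shm_prod[OF B b one2 g2, of Q1 R1 M1 f1 g1]
  show ?thesis
  proof
    assume H: "classical_prime (R1 \<times> R2) (one1, one2) m n (M1 \<times> M2) (prod_hop f1 f2) (prod_ext g1 g2)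
           (prod_phi phi1 phi2) (Q1 \<times> M2)"
    note HH = H[unfolded cp_iff]
    have S: "Q1 \<in> subhypermodules R1 m n M1 f1 g1" using conjunct1[OF HH] shm by simp
    then have Qne: "Q1 \<noteq> {}" unfolding subhypermodules_def by blast
    have phi: "prod_phi phi1 phi2 (Q1 \<times> M2) = phi1 Q1 \<times> M2"
      using Qne b assms(7) by (auto simp: prod_phi_def)
    have ne: "Q1 \<noteq> M1" using conjunct1[OF conjunct2[OF HH]] by blast
    have "\<exists>i<n-1. g1 (rs ! i # replicate (n-2) one1) a \<subseteq> Q1"
      if rs: "rs \<in> lists R1" "a \<in> M1" "length rs = n - 1" "g1 rs a \<subseteq> Q1 - phi1 Q1" for rs a
    proof -
      define ps where "ps = zip rs (replicate (n-1) one2)"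
      have ps: "ps \<in> lists (R1 \<times> R2)" "length ps = n - 1" "map fst ps = rs" "map snd ps = replicate (n-1) one2"
        using rs one2 by (auto simp: ps_def dest: set_zip_leftD set_zip_rightD)
      have "prod_ext g1 g2 ps (a, zM2) \<subseteq> (Q1 \<times> M2) - prod_phi phi1 phi2 (Q1 \<times> M2)"
        unfolding phi prod_ext_def using ps rs g2r[OF b] by auto
      then obtain i where i: "i < n - 1"
        "prod_ext g1 g2 (ps ! i # replicate (n-2) (one1, one2)) (a, zM2) \<subseteq> Q1 \<times> M2"
        using conjunct2[OF conjunct2[OF HH], rule_format, OF ps(1) _ ps(2)] rs(2) b by blast
      have psi: "ps ! i = (rs ! i, one2)" using i ps by (simp add: ps_def)
      have "g1 (rs ! i # replicate (n-2) one1) a \<times> g2 (one2 # replicate (n-2) one2) zM2 \<subseteq> Q1 \<times> M2"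
        using i(2) psi by (simp add: prod_ext_def)
      moreover have "g2 (one2 # replicate (n-2) one2) zM2 \<noteq> {}"
        using g2r[OF b] unfolding rl2 by blast
      ultimately show ?thesis using i(1) by blast
    qed
    then show "classical_prime R1 one1 m n M1 f1 g1 phi1 Q1"
      unfolding cp_iff using S ne by blast
  next
    assume H: "classical_prime R1 one1 m n M1 f1 g1 phi1 Q1"
    note HH = H[unfolded cp_iff]
    have S: "Q1 \<in> subhypermodules R1 m n M1 f1 g1" using conjunct1[OF HH] .
    then have Qne: "Q1 \<noteq> {}" unfolding subhypermodules_def by blast
    have phi: "prod_phi phi1 phi2 (Q1 \<times> M2) = phi1 Q1 \<times> M2"
      using Qne b assms(7) by (auto simp: prod_phi_def)
    have "Q1 \<noteq> M1" using conjunct1[OF conjunct2[OF HH]] .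
    then have ne: "Q1 \<times> M2 \<noteq> M1 \<times> M2" using b by blast
    have "\<exists>i<n-1. prod_ext g1 g2 (ps ! i # replicate (n-2) (one1, one2)) p \<subseteq> Q1 \<times> M2"
      if ps: "ps \<in> lists (R1 \<times> R2)" "p \<in> M1 \<times> M2" "length ps = n - 1"
        "prod_ext g1 g2 ps p \<subseteq> Q1 \<times> M2 - prod_phi phi1 phi2 (Q1 \<times> M2)" for ps p
    proof -
      have l: "map fst ps \<in> lists R1" "map snd ps \<in> lists R2" using ps(1) by (auto simp: mem_Times_iff)
      have p: "fst p \<in> M1" "snd p \<in> M2" using ps(2) by auto
      have "g2 (map snd ps) (snd p) \<noteq> {}" using hm_g[OF assms(4) l(2) p(2)] ps(3) by simp
      moreover have "g1 (map fst ps) (fst p) \<times> g2 (map snd ps) (snd p) \<subseteq> (Q1 - phi1 Q1) \<times> M2"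
        using ps(4) unfolding phi prod_ext_def by blast
      ultimately have "g1 (map fst ps) (fst p) \<subseteq> Q1 - phi1 Q1" by blast
      then obtain i where i: "i < n - 1" "g1 (map fst ps ! i # replicate (n-2) one1) (fst p) \<subseteq> Q1"
      proof -
        have "length (map fst ps) = n - 1" using ps(3) by simp
        then show ?thesis using that conjunct2[OF conjunct2[OF HH], rule_format, OF l(1) p(1)]
          \<open>g1 (map fst ps) (fst p) \<subseteq> Q1 - phi1 Q1\<close> by blast
      qed
      have "snd (ps ! i) \<in> R2" using ps(1) i ps(3) by (auto simp: mem_Times_iff)
      then have "snd (ps ! i) # replicate (n-2) one2 \<in> lists R2" using one2 by auto
      moreover have "length (snd (ps ! i) # replicate (n-2) one2) = n - 1" using n2 by simp
      ultimately have "g2 (snd (ps ! i) # replicate (n-2) one2) (snd p) \<subseteq> M2"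
        using hm_g[OF assms(4) _ p(2)] by blast
      then have "prod_ext g1 g2 (ps ! i # replicate (n-2) (one1, one2)) p \<subseteq> Q1 \<times> M2"
      proof -
        have "map fst (ps ! i # replicate (n-2) (one1, one2)) = map fst ps ! i # replicate (n-2) one1"
          using i(1) ps(3) by simp
        moreover have "map snd (ps ! i # replicate (n-2) (one1, one2)) = snd (ps ! i) # replicate (n-2) one2"
          by simp
        ultimately show ?thesis using i(2) \<open>g2 (snd (ps ! i) # _) (snd p) \<subseteq> M2\<close>
          unfolding prod_ext_def by (simp add: Sigma_mono)
      qed
      then show ?thesis using i(1) by blast
    qed
    note C = this
    have S': "Q1 \<times> M2 \<in> subhypermodules (R1 \<times> R2) m n (M1 \<times> M2) (prod_hop f1 f2) (prod_ext g1 g2)"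
      using shm S by (rule iffD2)
    show "classical_prime (R1 \<times> R2) (one1, one2) m n (M1 \<times> M2) (prod_hop f1 f2) (prod_ext g1 g2)
           (prod_phi phi1 phi2) (Q1 \<times> M2)"
      unfolding cp_iff
    proof (intro conjI allI impI)
      show "Q1 \<times> M2 \<in> subhypermodules (R1 \<times> R2) m n (M1 \<times> M2) (prod_hop f1 f2) (prod_ext g1 g2)" by (rule S')
      show "Q1 \<times> M2 \<noteq> M1 \<times> M2" by (rule ne)
    qed (rule C)
  qed
qed

end
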